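(* Let $\mathcal{A}=\langle Q,A,E,I,T\rangle$ be a finite automaton over the free monoid $A^*$ and let $\omega$ and $\omega'$ be two total orders on $Q$. Then $$\mathbf{N}\wedge\mathbf{S}\wedge\mathbf{P}\ \vdash\ \mathsf{SR}_\omega(\mathcal{A})\equiv\mathsf{SR}_{\omega'}(\mathcal{A}),$$ that is, the two expressions produced by the system-solution method for the orders $\omega$ and $\omega'$ can be proved equal using the natural identities $\mathbf{N}$ together with the aperiodic identities $\mathbf{S}$ and $\mathbf{P}$.
   Context: Rational expressions over $A^*$ are the well-formed formulas built from the constants $\mathsf{0}$ and $\mathsf{1}$ and the letters of $A$ by the binary operators $+$ and $\cdot$ and the unary operator ${}^*$. The expression $\mathsf{E}$ denotes the language $|\mathsf{E}|\subseteq A^*$ in the usual way. All expressions are taken reduced modulo the trivial identities $\mathsf{E}+\mathsf{0}\equiv\mathsf{E}$, $\mathsf{0}+\mathsf{E}\equiv\mathsf{E}$, $\mathsf{E}\cdot\mathsf{0}\equiv\mathsf{0}$, $\mathsf{0}\cdot\mathsf{E}\equiv\mathsf{0}$, $\mathsf{E}\cdot\mathsf{1}\equiv\mathsf{E}$, $\mathsf{1}\cdot\mathsf{E}\equiv\mathsf{E}$, $\mathsf{0}^*\equiv\mathsf{1}$. All computations on expressions below are performed modulo these identities. The natural identities $\mathbf{N}$ are: - associativity: $(\mathsf{E}+\mathsf{F})+\mathsf{G}\equiv\mathsf{E}+(\mathsf{F}+\mathsf{G})$ and $(\mathsf{E}\cdot\mathsf{F})\cdot\mathsf{G}\equiv\mathsf{E}\cdot(\mathsf{F}\cdot\mathsf{G})$;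 - distributivity: $\mathsf{E}\cdot(\mathsf{F}+\mathsf{G})\equiv\mathsf{E}\cdot\mathsf{F}+\mathsf{E}\cdot\mathsf{G}$ and $(\mathsf{E}+\mathsf{F})\cdot\mathsf{G}\equiv\mathsf{E}\cdot\mathsf{G}+\mathsf{F}\cdot\mathsf{G}$; - commutativity: $\mathsf{E}+\mathsf{F}\equiv\mathsf{F}+\mathsf{E}$. The aperiodic identities are: - $\mathbf{S}$: $(\mathsf{E}+\mathsf{F})^*\equiv\mathsf{E}^*\cdot(\mathsf{F}\cdot\mathsf{E}^* )^*$ and $(\mathsf{E}+\mathsf{F})^*\equiv(\mathsf{E}^*\cdot\mathsf{F})^*\cdot\mathsf{E}^*$; - $\mathbf{P}$: $(\mathsf{E}\cdot\mathsf{F})^*\equiv\mathsf{1}+\mathsf{E}\cdot(\mathsf{F}\cdot\mathsf{E})^*\cdot\mathsf{F}$. For a set $\mathcal{I}$ of identities, $\mathcal{I}\vdash\mathsf{X}\equiv\mathsf{Y}$ means that $\mathsf{X}$ and $\mathsf{Y}$ are related by the smallest congruence on expressions (for $+$, $\cdot$ and ${}^*$) that contains all instances of the identities in $\mathcal{I}$, working modulo the trivial identities. System-solution method. For $p,q\in Q$, let $\mathsf{E}_{p,q}$ be the sum, written in some fixed order and bracketing, of the letters labelling the transitions from $p$ to $q$; it is $\mathsf{0}$ if there is no such transition. The method maintains a set $Q'\subseteq Q$ and expressions $\mathsf{G}_p$, $\mathsf{H}$, $\mathsf{F}_{p,q}$, $\mathsf{K}_p$ for $p,q\in Q'$. The initial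 values are: - $Q'=Q$; - $\mathsf{G}_p=\mathsf{1}$ if $p\in I$ and $\mathsf{0}$ otherwise; - $\mathsf{H}=\mathsf{0}$; - $\mathsf{F}_{p,q}=\mathsf{E}_{p,q}$; - $\mathsf{K}_p=\mathsf{1}$ if $p\in T$ and $\mathsf{0}$ otherwise. The states of $Q$ are then eliminated one by one in increasing order for $\omega$. Eliminating $q\in Q'$ replaces the expressions, for all $r,p\in Q'\setminus\{q\}$, by: - $\mathsf{G}_r\leftarrow\mathsf{G}_r+\mathsf{G}_q\cdot\mathsf{F}_{q,q}^*\cdot\mathsf{F}_{q,r}$; - $\mathsf{H}\leftarrow\mathsf{H}+\mathsf{G}_q\cdot\mathsf{F}_{q,q}^*\cdot\mathsf{K}_q$; - $\mathsf{F}_{r,p}\leftarrow\mathsf{F}_{r,p}+\mathsf{F}_{r,q}\cdot\mathsf{F}_{q,q}^*\cdot\mathsf{F}_{q,p}$; - $\mathsf{K}_r\leftarrow\mathsf{K}_r+\mathsf{F}_{r,q}\cdot\mathsf{F}_{q,q}^*\cdot\mathsf{K}_q$; and then sets $Q'\leftarrow Q'\setminus\{q\}$. When $Q'$ is empty, the final value of $\mathsf{H}$ is the expression $\mathsf{SR}_\omega(\mathcal{A})$. It denotes the language accepted by $\mathcal{A}$. *)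

theory Defs
  imports Main
begin

datatype 'a rexp = RZero | ROne | RAtom 'a | RPlus "'a rexp" "'a rexp"
  | RTimes "'a rexp" "'a rexp" | RStar "'a rexp"

fun atoms :: "'a rexp \<Rightarrow> 'a set" where
  "atoms RZero = {}"
| "atoms ROne = {}"
| "atoms (RAtom a) = {a}"
| "atoms (RPlus E F) = atoms E \<union> atoms F"
| "atoms (RTimes E F) = atoms E \<union> atoms F"
| "atoms (RStar E) = atoms E"

text \<open>Operations modulo the trivial identities
  E+0=E, 0+E=E, E0=0, 0E=0, E1=E, 1E=E, 0*=1 (smart constructors).\<close>

definition rplus :: "'a rexp \<Rightarrow> 'a rexp \<Rightarrow> 'a rexp" where
  "rplus E F = (if E = RZero then F else if F = RZero then E else RPlus E F)"

definition rtimes :: "'a rexp \<Rightarrow> 'a rexp \<Rightarrow> 'a rexp" where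
  "rtimes E F = (if E = RZero \<or> F = RZero then RZero
                 else if E = ROne then F else if F = ROne then E else RTimes E F)"

definition rstar :: "'a rexp \<Rightarrow> 'a rexp" where
  "rstar E = (if E = RZero then ROne else RStar E)"

fun red :: "'a rexp \<Rightarrow> 'a rexp" where
  "red RZero = RZero"
| "red ROne = ROne"
| "red (RAtom a) = RAtom a"
| "red (RPlus E F) = rplus (red E) (red F)"
| "red (RTimes E F) = rtimes (red E) (red F)"
| "red (RStar E) = rstar (red E)"

definition rexp_over :: "'a set \<Rightarrow> 'a rexp \<Rightarrow> bool" where
  "rexp_over A X \<longleftrightarrow> red X = X \<and> atoms X \<subseteq> A"

text \<open>Instances (over A, taken modulo the trivial identities) of the
  natural identities N and the aperiodic identities S and P.\<close>
inductive NSP_ax :: "'a set \<Rightarrow> 'a rexp \<Rightarrow> 'a rexp \<Rightarrow> bool" for A where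
  assoc_plus: "atoms E \<union> atoms F \<union> atoms G \<subseteq> A \<Longrightarrow>
     NSP_ax A (red (RPlus (RPlus E F) G)) (red (RPlus E (RPlus F G)))"
| assoc_times: "atoms E \<union> atoms F \<union> atoms G \<subseteq> A \<Longrightarrow>
     NSP_ax A (red (RTimes (RTimes E F) G)) (red (RTimes E (RTimes F G)))"
| distr_left: "atoms E \<union> atoms F \<union> atoms G \<subseteq> A \<Longrightarrow>
     NSP_ax A (red (RTimes E (RPlus F G))) (red (RPlus (RTimes E F) (RTimes E G)))"
| distr_right: "atoms E \<union> atoms F \<union> atoms G \<subseteq> A \<Longrightarrow>
     NSP_ax A (red (RTimes (RPlus E F) G)) (red (RPlus (RTimes E G) (RTimes F G)))"
| comm: "atoms E \<union> atoms F \<subseteq> A \<Longrightarrow>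
     NSP_ax A (red (RPlus E F)) (red (RPlus F E))"
| S1: "atoms E \<union> atoms F \<subseteq> A \<Longrightarrow>
     NSP_ax A (red (RStar (RPlus E F))) (red (RTimes (RStar E) (RStar (RTimes F (RStar E)))))"
| S2: "atoms E \<union> atoms F \<subseteq> A \<Longrightarrow>
     NSP_ax A (red (RStar (RPlus E F))) (red (RTimes (RStar (RTimes (RStar E) F)) (RStar E)))"
| P: "atoms E \<union> atoms F \<subseteq> A \<Longrightarrow>
     NSP_ax A (red (RStar (RTimes E F)))
               (red (RPlus ROne (RTimes (RTimes E (RStar (RTimes F E))) F)))"

inductive derivable :: "('a rexp \<Rightarrow> 'a rexp \<Rightarrow> bool) \<Rightarrow> 'a set \<Rightarrow> 'a rexp \<Rightarrow> 'a rexp \<Rightarrow> bool"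
  for Ax A where
  ax: "Ax X Y \<Longrightarrow> derivable Ax A X Y"
| refl: "rexp_over A X \<Longrightarrow> derivable Ax A X X"
| sym: "derivable Ax A X Y \<Longrightarrow> derivable Ax A Y X"
| trans: "derivable Ax A X Y \<Longrightarrow> derivable Ax A Y Z \<Longrightarrow> derivable Ax A X Z"
| cong_plus: "derivable Ax A X X' \<Longrightarrow> derivable Ax A Y Y' \<Longrightarrow>
     derivable Ax A (rplus X Y) (rplus X' Y')"
| cong_times: "derivable Ax A X X' \<Longrightarrow> derivable Ax A Y Y' \<Longrightarrow>
     derivable Ax A (rtimes X Y) (rtimes X' Y')"
| cong_star: "derivable Ax A X X' \<Longrightarrow> derivable Ax A (rstar X) (rstar X')"

definition finite_automaton :: "'q set \<Rightarrow> 'a set \<Rightarrow> ('q \<times> 'a \<times> 'q) set \<Rightarrow> 'q set \<Rightarrow> 'q set \<Rightarrow> bool"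
  where "finite_automaton Q A E I T \<longleftrightarrow> finite Q \<and> finite A \<and>
     E \<subseteq> Q \<times> A \<times> Q \<and> I \<subseteq> Q \<and> T \<subseteq> Q"

inductive sum_of :: "'a rexp \<Rightarrow> 'a set \<Rightarrow> bool" where
  atom: "sum_of (RAtom a) {a}"
| plus: "sum_of X S \<Longrightarrow> sum_of Y S' \<Longrightarrow> S \<inter> S' = {} \<Longrightarrow> sum_of (RPlus X Y) (S \<union> S')"

text \<open>lab p q is a valid choice of the expression E_{p,q}.\<close>
definition label_exprs :: "('q \<times> 'a \<times> 'q) set \<Rightarrow> ('q \<Rightarrow> 'q \<Rightarrow> 'a rexp) \<Rightarrow> bool" where
  "label_exprs E lab \<longleftrightarrow> (\<forall>p q. let S = {a. (p, a, q) \<in> E} in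
      (S = {} \<and> lab p q = RZero) \<or> (S \<noteq> {} \<and> sum_of (lab p q) S))"

datatype ('q, 'a) sstate = SState "'q set" "'q \<Rightarrow> 'a rexp" "'a rexp"
   "'q \<Rightarrow> 'q \<Rightarrow> 'a rexp" "'q \<Rightarrow> 'a rexp"

fun elim :: "('q, 'a) sstate \<Rightarrow> 'q \<Rightarrow> ('q, 'a) sstate" where
  "elim (SState Q' G H F K) q =
     (let s = rstar (F q q); R = Q' - {q} in
      SState R
        (\<lambda>r. if r \<in> R then rplus (G r) (rtimes (rtimes (G q) s) (F q r)) else G r)
        (rplus H (rtimes (rtimes (G q) s) (K q)))
        (\<lambda>r p. if r \<in> R \<and> p \<in> R then rplus (F r p) (rtimes (rtimes (F r q) s) (F q p)) else F r p)
        (\<lambda>r. if r \<in> R then rplus (K r) (rtimes (rtimes (F r q) s) (K q)) else K r))"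

fun sstate_H :: "('q, 'a) sstate \<Rightarrow> 'a rexp" where
  "sstate_H (SState _ _ H _ _) = H"

text \<open>A total order \<omega> on Q is given as the list of the elements of Q in increasing order.\<close>
definition total_order_list :: "'q set \<Rightarrow> 'q list \<Rightarrow> bool" where
  "total_order_list Q \<omega> \<longleftrightarrow> distinct \<omega> \<and> set \<omega> = Q"

definition SR :: "'q list \<Rightarrow> 'q set \<Rightarrow> 'q set \<Rightarrow> 'q set \<Rightarrow> ('q \<Rightarrow> 'q \<Rightarrow> 'a rexp) \<Rightarrow> 'a rexp" where
  "SR \<omega> Q I T lab = sstate_H (foldl elim
      (SState Q (\<lambda>p. if p \<in> I then ROne else RZero) RZero lab
              (\<lambda>p. if p \<in> T then ROne else RZero)) \<omega>)"

end

theory Submission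
  imports Defs "HOL-Library.Multiset"
begin


abbreviation deq :: "'a set \<Rightarrow> 'a rexp \<Rightarrow> 'a rexp \<Rightarrow> bool" where
  "deq A X Y \<equiv> derivable (NSP_ax A) A X Y"

lemma red_rplus: "red X = X \<Longrightarrow> red Y = Y \<Longrightarrow> red (rplus X Y) = rplus X Y"
  by (auto simp: rplus_def)
lemma red_rtimes: "red X = X \<Longrightarrow> red Y = Y \<Longrightarrow> red (rtimes X Y) = rtimes X Y"
  by (auto simp: rtimes_def rplus_def)
lemma red_rstar: "red X = X \<Longrightarrow> red (rstar X) = rstar X"
  by (auto simp: rstar_def)
lemma red_red: "red (red X) = red X"
  by (induction X) (auto simp: red_rplus red_rtimes red_rstar)
lemma atoms_rplus: "atoms (rplus X Y) \<subseteq> atoms X \<union> atoms Y" by (auto simp: rplus_def)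
lemma atoms_rtimes: "atoms (rtimes X Y) \<subseteq> atoms X \<union> atoms Y" by (auto simp: rtimes_def)
lemma atoms_rstar: "atoms (rstar X) \<subseteq> atoms X" by (auto simp: rstar_def)
lemma atoms_red: "atoms (red X) \<subseteq> atoms X"
  apply (induction X)
  using atoms_rplus atoms_rtimes atoms_rstar by fastforce+

lemma over_rplus[simp]: "rexp_over A X \<Longrightarrow> rexp_over A Y \<Longrightarrow> rexp_over A (rplus X Y)"
  unfolding rexp_over_def using atoms_rplus[of X Y] red_rplus[of X Y] by (meson le_supI order_trans)
lemma over_rtimes[simp]: "rexp_over A X \<Longrightarrow> rexp_over A Y \<Longrightarrow> rexp_over A (rtimes X Y)"
  unfolding rexp_over_def using atoms_rtimes[of X Y] red_rtimes[of X Y] by (meson le_supI order_trans)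
lemma over_rstar[simp]: "rexp_over A X \<Longrightarrow> rexp_over A (rstar X)"
  unfolding rexp_over_def using atoms_rstar[of X] red_rstar[of X] by (meson order_trans)
lemma over_One[simp]: "rexp_over A ROne" and over_Zero[simp]: "rexp_over A RZero"
  by (auto simp: rexp_over_def)

lemma over_red: "atoms X \<subseteq> A \<Longrightarrow> rexp_over A (red X)"
  unfolding rexp_over_def using red_red[of X] atoms_red[of X] by (meson order_trans)

lemma ax_over: "NSP_ax A X Y \<Longrightarrow> rexp_over A X \<and> rexp_over A Y"
proof (induction rule: NSP_ax.induct)
qed (rule conjI; rule over_red; simp)+

lemma deq_over: "deq A X Y \<Longrightarrow> rexp_over A X \<and> rexp_over A Y"
proof (induction rule: derivable.induct)
  case (ax X Y) then show ?case by (rule ax_over)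
qed simp_all

lemma deq_refl[simp]: "rexp_over A X \<Longrightarrow> deq A X X" by (rule derivable.refl)
lemma deq_sym: "deq A X Y \<Longrightarrow> deq A Y X" by (rule derivable.sym)
lemma deq_trans: "deq A X Y \<Longrightarrow> deq A Y Z \<Longrightarrow> deq A X Z" by (rule derivable.trans)
lemmas deq_plus = derivable.cong_plus and deq_times = derivable.cong_times
  and deq_star = derivable.cong_star

lemma ov: "rexp_over A X \<Longrightarrow> red X = X \<and> atoms X \<subseteq> A" by (simp add: rexp_over_def)

lemma ax_aplus: "rexp_over A X \<Longrightarrow> rexp_over A Y \<Longrightarrow> rexp_over A Z \<Longrightarrow>
  deq A (rplus (rplus X Y) Z) (rplus X (rplus Y Z))"
  using NSP_ax.assoc_plus[of X Y Z A] unfolding rexp_over_def by (simp add: derivable.ax)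
lemma ax_atimes: "rexp_over A X \<Longrightarrow> rexp_over A Y \<Longrightarrow> rexp_over A Z \<Longrightarrow>
  deq A (rtimes (rtimes X Y) Z) (rtimes X (rtimes Y Z))"
  using NSP_ax.assoc_times[of X Y Z A] unfolding rexp_over_def by (simp add: derivable.ax)
lemma ax_dl: "rexp_over A X \<Longrightarrow> rexp_over A Y \<Longrightarrow> rexp_over A Z \<Longrightarrow>
  deq A (rtimes X (rplus Y Z)) (rplus (rtimes X Y) (rtimes X Z))"
  using NSP_ax.distr_left[of X Y Z A] unfolding rexp_over_def by (simp add: derivable.ax)
lemma ax_dr: "rexp_over A X \<Longrightarrow> rexp_over A Y \<Longrightarrow> rexp_over A Z \<Longrightarrow>
  deq A (rtimes (rplus X Y) Z) (rplus (rtimes X Z) (rtimes Y Z))"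
  using NSP_ax.distr_right[of X Y Z A] unfolding rexp_over_def by (simp add: derivable.ax)
lemma ax_comm: "rexp_over A X \<Longrightarrow> rexp_over A Y \<Longrightarrow>
  deq A (rplus X Y) (rplus Y X)"
  using NSP_ax.comm[of X Y A] unfolding rexp_over_def by (simp add: derivable.ax)
lemma ax_S1: "rexp_over A X \<Longrightarrow> rexp_over A Y \<Longrightarrow>
  deq A (rstar (rplus X Y)) (rtimes (rstar X) (rstar (rtimes Y (rstar X))))"
  using NSP_ax.S1[of X Y A] unfolding rexp_over_def by (simp add: derivable.ax)
lemma ax_S2: "rexp_over A X \<Longrightarrow> rexp_over A Y \<Longrightarrow>
  deq A (rstar (rplus X Y)) (rtimes (rstar (rtimes (rstar X) Y)) (rstar X))"
  using NSP_ax.S2[of X Y A] unfolding rexp_over_def by (simp add: derivable.ax)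
lemma ax_P: "rexp_over A X \<Longrightarrow> rexp_over A Y \<Longrightarrow>
  deq A (rstar (rtimes X Y)) (rplus ROne (rtimes (rtimes X (rstar (rtimes Y X))) Y))"
  using NSP_ax.P[of X Y A] unfolding rexp_over_def by (simp add: derivable.ax)



datatype pe = V nat | Zr | On | Pl pe pe | Ti pe pe

fun ev :: "'a rexp list \<Rightarrow> pe \<Rightarrow> 'a rexp" where
  "ev \<rho> (V i) = \<rho> ! i"
| "ev \<rho> Zr = RZero"
| "ev \<rho> On = ROne"
| "ev \<rho> (Pl e f) = rplus (ev \<rho> e) (ev \<rho> f)"
| "ev \<rho> (Ti e f) = rtimes (ev \<rho> e) (ev \<rho> f)"

fun nf :: "pe \<Rightarrow> nat list list" where
  "nf (V i) = [[i]]"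
| "nf Zr = []"
| "nf On = [[]]"
| "nf (Pl e f) = nf e @ nf f"
| "nf (Ti e f) = concat (map (\<lambda>m. map (\<lambda>n. m @ n) (nf f)) (nf e))"

fun bnd :: "nat \<Rightarrow> pe \<Rightarrow> bool" where
  "bnd k (V i) = (i < k)"
| "bnd k Zr = True"
| "bnd k On = True"
| "bnd k (Pl e f) = (bnd k e \<and> bnd k f)"
| "bnd k (Ti e f) = (bnd k e \<and> bnd k f)"

fun evp :: "'a rexp list \<Rightarrow> nat list \<Rightarrow> 'a rexp" where
  "evp \<rho> [] = ROne"
| "evp \<rho> (i # m) = rtimes (\<rho> ! i) (evp \<rho> m)"

fun evs :: "'a rexp list \<Rightarrow> nat list list \<Rightarrow> 'a rexp" where
  "evs \<rho> [] = RZero"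
| "evs \<rho> (m # ms) = rplus (evp \<rho> m) (evs \<rho> ms)"

definition okenv :: "'a set \<Rightarrow> 'a rexp list \<Rightarrow> bool" where
  "okenv A \<rho> \<longleftrightarrow> (\<forall>x\<in>set \<rho>. rexp_over A x)"

abbreviation mb :: "nat \<Rightarrow> nat list \<Rightarrow> bool" where "mb k m \<equiv> (\<forall>i\<in>set m. i < k)"
abbreviation msb :: "nat \<Rightarrow> nat list list \<Rightarrow> bool" where "msb k ms \<equiv> (\<forall>m\<in>set ms. mb k m)"

lemma nf_bnd: "bnd k e \<Longrightarrow> msb k (nf e)"
  by (induction e) auto

lemma evp_over: "okenv A \<rho> \<Longrightarrow> mb (length \<rho>) m \<Longrightarrow> rexp_over A (evp \<rho> m)"
  by (induction m) (auto simp: okenv_def)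

lemma evs_over: "okenv A \<rho> \<Longrightarrow> msb (length \<rho>) ms \<Longrightarrow> rexp_over A (evs \<rho> ms)"
  by (induction ms) (auto simp: evp_over)

lemma rtimes_One_left[simp]: "rtimes ROne X = X" by (simp add: rtimes_def)
lemma rtimes_One_right[simp]: "rtimes X ROne = X" by (simp add: rtimes_def)
lemma rtimes_Zero_left[simp]: "rtimes RZero X = RZero" by (simp add: rtimes_def)
lemma rtimes_Zero_right[simp]: "rtimes X RZero = RZero" by (simp add: rtimes_def)
lemma rplus_Zero_left[simp]: "rplus RZero X = X" by (simp add: rplus_def)
lemma rplus_Zero_right[simp]: "rplus X RZero = X" by (simp add: rplus_def)

lemma evp_app: "okenv A \<rho> \<Longrightarrow> mb (length \<rho>) m \<Longrightarrow> mb (length \<rho>) n \<Longrightarrow>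
  deq A (rtimes (evp \<rho> m) (evp \<rho> n)) (evp \<rho> (m @ n))"
proof (induction m)
  case Nil then show ?case by (simp add: evp_over)
next
  case (Cons i m)
  have x: "rexp_over A (\<rho> ! i)" using Cons.prems by (auto simp: okenv_def)
  have "deq A (rtimes (rtimes (\<rho> ! i) (evp \<rho> m)) (evp \<rho> n))
              (rtimes (\<rho> ! i) (rtimes (evp \<rho> m) (evp \<rho> n)))"
    using Cons.prems x by (intro ax_atimes) (auto simp: evp_over)
  moreover have "deq A (rtimes (\<rho> ! i) (rtimes (evp \<rho> m) (evp \<rho> n))) (rtimes (\<rho> ! i) (evp \<rho> (m @ n)))"
    using Cons x by (intro deq_times) auto
  ultimately show ?case by (auto intro: deq_trans)
qed

lemma evs_app: "okenv A \<rho> \<Longrightarrow> msb (length \<rho>) m \<Longrightarrow> msb (length \<rho>) n \<Longrightarrow>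
  deq A (rplus (evs \<rho> m) (evs \<rho> n)) (evs \<rho> (m @ n))"
proof (induction m)
  case Nil then show ?case by (simp add: evs_over)
next
  case (Cons i m)
  have x: "rexp_over A (evp \<rho> i)" using Cons.prems by (auto simp: evp_over)
  have "deq A (rplus (rplus (evp \<rho> i) (evs \<rho> m)) (evs \<rho> n))
              (rplus (evp \<rho> i) (rplus (evs \<rho> m) (evs \<rho> n)))"
    using Cons.prems x by (intro ax_aplus) (auto simp: evs_over)
  moreover have "deq A (rplus (evp \<rho> i) (rplus (evs \<rho> m) (evs \<rho> n))) (rplus (evp \<rho> i) (evs \<rho> (m @ n)))"
    using Cons x by (intro deq_plus) auto
  ultimately show ?case by (auto intro: deq_trans)
qed

lemma evs_mono: "okenv A \<rho> \<Longrightarrow> mb (length \<rho>) m \<Longrightarrow> msb (length \<rho>) ns \<Longrightarrow>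
  deq A (rtimes (evp \<rho> m) (evs \<rho> ns)) (evs \<rho> (map (\<lambda>n. m @ n) ns))"
proof (induction ns)
  case Nil then show ?case by simp
next
  case (Cons n ns)
  have "deq A (rtimes (evp \<rho> m) (rplus (evp \<rho> n) (evs \<rho> ns)))
     (rplus (rtimes (evp \<rho> m) (evp \<rho> n)) (rtimes (evp \<rho> m) (evs \<rho> ns)))"
    using Cons.prems by (intro ax_dl) (auto simp: evs_over evp_over)
  moreover have "deq A (rplus (rtimes (evp \<rho> m) (evp \<rho> n)) (rtimes (evp \<rho> m) (evs \<rho> ns)))
     (rplus (evp \<rho> (m @ n)) (evs \<rho> (map (\<lambda>n. m @ n) ns)))"
    using Cons by (intro deq_plus evp_app) auto
  ultimately show ?case by (auto intro: deq_trans)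
qed

lemma evs_mult: "okenv A \<rho> \<Longrightarrow> msb (length \<rho>) ms \<Longrightarrow> msb (length \<rho>) ns \<Longrightarrow>
  deq A (rtimes (evs \<rho> ms) (evs \<rho> ns)) (evs \<rho> (concat (map (\<lambda>m. map (\<lambda>n. m @ n) ns) ms)))"
proof (induction ms)
  case Nil then show ?case by simp
next
  case (Cons m ms)
  have "deq A (rtimes (rplus (evp \<rho> m) (evs \<rho> ms)) (evs \<rho> ns))
     (rplus (rtimes (evp \<rho> m) (evs \<rho> ns)) (rtimes (evs \<rho> ms) (evs \<rho> ns)))"
    using Cons.prems by (intro ax_dr) (auto simp: evs_over evp_over)
  moreover have "deq A (rplus (rtimes (evp \<rho> m) (evs \<rho> ns)) (rtimes (evs \<rho> ms) (evs \<rho> ns)))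
     (rplus (evs \<rho> (map (\<lambda>n. m @ n) ns)) (evs \<rho> (concat (map (\<lambda>m. map (\<lambda>n. m @ n) ns) ms))))"
    using Cons by (intro deq_plus evs_mono) auto
  moreover have "deq A (rplus (evs \<rho> (map (\<lambda>n. m @ n) ns)) (evs \<rho> (concat (map (\<lambda>m. map (\<lambda>n. m @ n) ns) ms))))
     (evs \<rho> (map (\<lambda>n. m @ n) ns @ concat (map (\<lambda>m. map (\<lambda>n. m @ n) ns) ms)))"
    using Cons.prems by (intro evs_app) auto
  ultimately show ?case by (auto intro: deq_trans)
qed

lemma ev_nf: "okenv A \<rho> \<Longrightarrow> bnd (length \<rho>) e \<Longrightarrow> deq A (ev \<rho> e) (evs \<rho> (nf e))"
proof (induction e)
  case (V i) then show ?case by (auto simp: okenv_def)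
next
  case (Pl e f)
  then have "deq A (rplus (ev \<rho> e) (ev \<rho> f)) (rplus (evs \<rho> (nf e)) (evs \<rho> (nf f)))"
    by (intro deq_plus) auto
  moreover have "deq A (rplus (evs \<rho> (nf e)) (evs \<rho> (nf f))) (evs \<rho> (nf e @ nf f))"
    using Pl.prems by (intro evs_app) (auto dest: nf_bnd)
  ultimately show ?case by (auto intro: deq_trans)
next
  case (Ti e f)
  then have "deq A (rtimes (ev \<rho> e) (ev \<rho> f)) (rtimes (evs \<rho> (nf e)) (evs \<rho> (nf f)))"
    by (intro deq_times) auto
  moreover have "deq A (rtimes (evs \<rho> (nf e)) (evs \<rho> (nf f))) (evs \<rho> (nf (Ti e f)))"
    using Ti.prems by simp (intro evs_mult; auto dest: nf_bnd)
  ultimately show ?case by (auto intro: deq_trans)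
qed auto

lemma plus_swap: "rexp_over A X \<Longrightarrow> rexp_over A Y \<Longrightarrow> rexp_over A Z \<Longrightarrow>
  deq A (rplus X (rplus Y Z)) (rplus Y (rplus X Z))"
proof -
  assume a: "rexp_over A X" "rexp_over A Y" "rexp_over A Z"
  have 1: "deq A (rplus X (rplus Y Z)) (rplus (rplus X Y) Z)" using a by (rule ax_aplus[THEN deq_sym])
  have 2: "deq A (rplus (rplus X Y) Z) (rplus (rplus Y X) Z)" using a by (intro deq_plus ax_comm) auto
  have 3: "deq A (rplus (rplus Y X) Z) (rplus Y (rplus X Z))" using a by (intro ax_aplus)
  show ?thesis by (rule deq_trans[OF deq_trans[OF 1 2] 3])
qed

lemma evs_move: "okenv A \<rho> \<Longrightarrow> msb (length \<rho>) (us @ x # vs) \<Longrightarrow>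
  deq A (evs \<rho> (us @ x # vs)) (evs \<rho> (x # us @ vs))"
proof (induction us)
  case Nil then show ?case by (auto intro!: deq_refl over_rplus evp_over evs_over)
next
  case (Cons u us)
  have "deq A (rplus (evp \<rho> u) (evs \<rho> (us @ x # vs))) (rplus (evp \<rho> u) (evs \<rho> (x # us @ vs)))"
    using Cons by (intro deq_plus) (auto simp: evp_over)
  moreover have "deq A (rplus (evp \<rho> u) (rplus (evp \<rho> x) (evs \<rho> (us @ vs))))
                   (rplus (evp \<rho> x) (rplus (evp \<rho> u) (evs \<rho> (us @ vs))))"
    using Cons.prems by (intro plus_swap) (auto simp: evp_over evs_over)
  ultimately show ?case by (auto intro: deq_trans)
qed

lemma evs_perm: "mset ms = mset ns \<Longrightarrow> okenv A \<rho> \<Longrightarrow> msb (length \<rho>) ms \<Longrightarrow>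
  deq A (evs \<rho> ms) (evs \<rho> ns)"
proof (induction ms arbitrary: ns)
  case Nil then show ?case by simp
next
  case (Cons m ms)
  have "m \<in> set ns" using Cons.prems(1) by (metis list.set_intros(1) set_mset_mset)
  then obtain us vs where ns: "ns = us @ m # vs" by (meson split_list)
  have ms: "mset ms = mset (us @ vs)" using Cons.prems(1) ns by simp
  have sb: "msb (length \<rho>) ns" using Cons.prems by (metis mset_eq_setD)
  have "deq A (evs \<rho> (m # ms)) (evs \<rho> (m # us @ vs))"
    using Cons ms by (auto intro!: deq_plus simp: evp_over)
  moreover have "deq A (evs \<rho> (m # us @ vs)) (evs \<rho> ns)"
  proof -
    have "deq A (evs \<rho> (us @ m # vs)) (evs \<rho> (m # us @ vs))"
      using sb ns Cons.prems(2) by (intro evs_move) auto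
    then show ?thesis using ns by (simp add: deq_sym)
  qed
  ultimately show ?case by (rule deq_trans)
qed

lemma evp_subst: "list_all2 (deq A) \<rho> \<sigma> \<Longrightarrow> mb (length \<rho>) m \<Longrightarrow> deq A (evp \<rho> m) (evp \<sigma> m)"
  by (induction m) (auto intro!: deq_times simp: list_all2_nthD list_all2_lengthD)

lemma evs_subst: "list_all2 (deq A) \<rho> \<sigma> \<Longrightarrow> msb (length \<rho>) ms \<Longrightarrow> deq A (evs \<rho> ms) (evs \<sigma> ms)"
  by (induction ms) (auto intro!: deq_plus evp_subst)

lemma okenv_l2: "list_all2 (deq A) \<rho> \<sigma> \<Longrightarrow> okenv A \<rho> \<and> okenv A \<sigma>"
proof (induction rule: list_all2_induct)
  case Nil then show ?case by (simp add: okenv_def)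
next
  case (Cons x xs y ys) then show ?case using deq_over[of A x y] by (simp add: okenv_def)
qed

lemma norm_main:
  assumes "list_all2 (deq A) \<rho> \<sigma>" "bnd (length \<rho>) e1" "bnd (length \<rho>) e2"
    "mset (nf e1) = mset (nf e2)"
  shows "deq A (ev \<rho> e1) (ev \<sigma> e2)"
proof -
  have ok: "okenv A \<rho>" "okenv A \<sigma>" and len: "length \<sigma> = length \<rho>"
    using okenv_l2[OF assms(1)] list_all2_lengthD[OF assms(1)] by auto
  have 1: "deq A (ev \<rho> e1) (evs \<rho> (nf e1))" using ok assms by (intro ev_nf)
  have 2: "deq A (evs \<rho> (nf e1)) (evs \<rho> (nf e2))" using ok assms by (intro evs_perm nf_bnd)
  have 3: "deq A (evs \<rho> (nf e2)) (evs \<sigma> (nf e2))" using assms by (intro evs_subst nf_bnd)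
  have 4: "deq A (evs \<sigma> (nf e2)) (ev \<sigma> e2)" using ok assms len by (auto intro!: ev_nf[THEN deq_sym])
  show ?thesis by (rule deq_trans[OF deq_trans[OF deq_trans[OF 1 2] 3] 4])
qed




lemma U:
  assumes X: "rexp_over A X" and Y: "rexp_over A Y"
  shows "deq A (rstar (rplus X Y))
     (rplus (rstar X) (rtimes (rtimes (rstar (rplus X Y)) Y) (rstar X)))"
proof -
  let ?Xs = "rstar X"
  let ?Z = "rstar (rtimes Y ?Xs)"
  have u1: "deq A (rstar (rplus X Y)) (rtimes (rstar (rtimes ?Xs Y)) ?Xs)" using assms by (rule ax_S2)
  have u2: "deq A (rtimes (rstar (rtimes ?Xs Y)) ?Xs)
     (rtimes (rplus ROne (rtimes (rtimes ?Xs ?Z) Y)) ?Xs)"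
    using assms by (intro deq_times ax_P) auto
  have u3: "deq A (rtimes (rplus ROne (rtimes (rtimes ?Xs ?Z) Y)) ?Xs)
        (rplus ?Xs (rtimes (rtimes (rtimes ?Xs ?Z) Y) ?Xs))"
    using norm_main[of A "[?Xs, ?Z, Y]" "[?Xs, ?Z, Y]" "Ti (Pl On (Ti (Ti (V 0) (V 1)) (V 2))) (V 0)"
       "Pl (V 0) (Ti (Ti (Ti (V 0) (V 1)) (V 2)) (V 0))"] assms by (simp add: add_mset_commute)
  have s1: "deq A (rtimes ?Xs ?Z) (rstar (rplus X Y))" using ax_S1[OF X Y] by (rule deq_sym)
  have u4: "deq A (rplus ?Xs (rtimes (rtimes (rtimes ?Xs ?Z) Y) ?Xs))
       (rplus (rstar X) (rtimes (rtimes (rstar (rplus X Y)) Y) (rstar X)))"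
    using norm_main[of A "[?Xs, rtimes ?Xs ?Z, Y]" "[?Xs, rstar (rplus X Y), Y]"
       "Pl (V 0) (Ti (Ti (V 1) (V 2)) (V 0))" "Pl (V 0) (Ti (Ti (V 1) (V 2)) (V 0))"] assms s1 by (simp add: add_mset_commute)
  show ?thesis by (rule deq_trans[OF deq_trans[OF deq_trans[OF u1 u2] u3] u4])
qed

lemma L1:
  assumes a: "rexp_over A a" and b: "rexp_over A b" and c: "rexp_over A c" and d: "rexp_over A d"
  shows "deq A (rstar (rplus a (rtimes (rtimes b (rstar d)) c)))
    (rplus (rstar a) (rtimes (rtimes (rtimes (rtimes (rstar a) b)
        (rstar (rplus d (rtimes (rtimes c (rstar a)) b)))) c) (rstar a)))"
proof -
  let ?as = "rstar a" and ?ds = "rstar d"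
  let ?F = "rtimes (rtimes c ?as) b"
  let ?Ds = "rstar (rplus d ?F)"
  let ?G = "rtimes (rtimes ?ds c) ?as"
  let ?W = "rstar (rtimes ?ds ?F)"
  have s1: "deq A (rstar (rplus a (rtimes (rtimes b ?ds) c)))
     (rtimes ?as (rstar (rtimes (rtimes (rtimes b ?ds) c) ?as)))"
    using assms by (intro ax_S1) auto
  have s2: "deq A (rtimes (rtimes (rtimes b ?ds) c) ?as) (rtimes b ?G)"
    using norm_main[of A "[b, ?ds, c, ?as]" "[b, ?ds, c, ?as]" "Ti (Ti (Ti (V 0) (V 1)) (V 2)) (V 3)"
       "Ti (V 0) (Ti (Ti (V 1) (V 2)) (V 3))"] assms by (simp add: add_mset_commute)
  have s3: "deq A (rstar (rtimes b ?G)) (rplus ROne (rtimes (rtimes b (rstar (rtimes ?G b))) ?G))"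
    using assms by (intro ax_P) auto
  have s4: "deq A (rtimes ?G b) (rtimes ?ds ?F)"
    using norm_main[of A "[?ds, c, ?as, b]" "[?ds, c, ?as, b]" "Ti (Ti (Ti (V 0) (V 1)) (V 2)) (V 3)"
       "Ti (V 0) (Ti (Ti (V 1) (V 2)) (V 3))"] assms by (simp add: add_mset_commute)
  have s5': "deq A ?Ds (rtimes ?W ?ds)"
    using assms by (intro ax_S2) auto
  note s5 = deq_sym[OF s5']
  have t1: "deq A (rtimes ?as (rstar (rtimes (rtimes (rtimes b ?ds) c) ?as)))
       (rtimes ?as (rstar (rtimes b ?G)))"
    using assms by (intro deq_times[OF deq_refl deq_star[OF s2]]) simp
  have t2: "deq A (rtimes ?as (rstar (rtimes b ?G)))
       (rtimes ?as (rplus ROne (rtimes (rtimes b (rstar (rtimes ?G b))) ?G)))"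
    using assms by (intro deq_times[OF deq_refl s3]) simp
  have t3: "deq A (rtimes ?as (rplus ROne (rtimes (rtimes b (rstar (rtimes ?G b))) ?G)))
       (rplus ?as (rtimes (rtimes (rtimes (rtimes ?as b) (rtimes ?W ?ds)) c) ?as))"
    using norm_main[of A "[?as, b, rstar (rtimes ?G b), ?ds, c]" "[?as, b, ?W, ?ds, c]"
       "Ti (V 0) (Pl On (Ti (Ti (V 1) (V 2)) (Ti (Ti (V 3) (V 4)) (V 0))))"
       "Pl (V 0) (Ti (Ti (Ti (Ti (V 0) (V 1)) (Ti (V 2) (V 3))) (V 4)) (V 0))"]
      assms deq_star[OF s4] by (simp add: add_mset_commute)
  have t4: "deq A (rplus ?as (rtimes (rtimes (rtimes (rtimes ?as b) (rtimes ?W ?ds)) c) ?as))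
        (rplus ?as (rtimes (rtimes (rtimes (rtimes ?as b) ?Ds) c) ?as))"
    using norm_main[of A "[?as, b, rtimes ?W ?ds, c]" "[?as, b, ?Ds, c]"
       "Pl (V 0) (Ti (Ti (Ti (Ti (V 0) (V 1)) (V 2)) (V 3)) (V 0))"
       "Pl (V 0) (Ti (Ti (Ti (Ti (V 0) (V 1)) (V 2)) (V 3)) (V 0))"]
      assms s5 by (simp add: add_mset_commute)
  show ?thesis by (rule deq_trans[OF deq_trans[OF deq_trans[OF deq_trans[OF s1 t1] t2] t3] t4])
qed


lemma L3:
  assumes a: "rexp_over A a" and b: "rexp_over A b" and c: "rexp_over A c" and d: "rexp_over A d"
  shows "deq A (rtimes (rtimes (rstar a) b) (rstar (rplus d (rtimes (rtimes c (rstar a)) b))))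
    (rtimes (rtimes (rstar (rplus a (rtimes (rtimes b (rstar d)) c))) b) (rstar d))"
proof -
  let ?as = "rstar a" and ?ds = "rstar d"
  let ?F = "rtimes (rtimes c ?as) b"
  let ?Ds = "rstar (rplus d ?F)"
  let ?As = "rstar (rplus a (rtimes (rtimes b ?ds) c))"
  let ?T1 = "rplus ?as (rtimes (rtimes (rtimes (rtimes ?as b) ?Ds) c) ?as)"
  let ?U = "rplus ?ds (rtimes (rtimes ?Ds ?F) ?ds)"
  have u: "deq A ?Ds ?U" using assms by (intro U) auto
  have l1: "deq A ?T1 ?As" using L1[OF a b c d] by (rule deq_sym)
  have v1: "deq A (rtimes (rtimes ?as b) ?Ds) (rtimes (rtimes ?as b) ?U)"
    using norm_main[of A "[?as, b, ?Ds]" "[?as, b, ?U]" "Ti (Ti (V 0) (V 1)) (V 2)" "Ti (Ti (V 0) (V 1)) (V 2)"]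
      assms u by (simp add: add_mset_commute)
  have v2: "deq A (rtimes (rtimes ?as b) ?U) (rtimes (rtimes ?T1 b) ?ds)"
    using norm_main[of A "[?as, b, ?ds, ?Ds, c]" "[?as, b, ?ds, ?Ds, c]"
      "Ti (Ti (V 0) (V 1)) (Pl (V 2) (Ti (Ti (V 3) (Ti (Ti (V 4) (V 0)) (V 1))) (V 2)))"
      "Ti (Ti (Pl (V 0) (Ti (Ti (Ti (Ti (V 0) (V 1)) (V 3)) (V 4)) (V 0))) (V 1)) (V 2)"]
      assms by (simp add: add_mset_commute)
  have v3: "deq A (rtimes (rtimes ?T1 b) ?ds) (rtimes (rtimes ?As b) ?ds)"
    using norm_main[of A "[?T1, b, ?ds]" "[?As, b, ?ds]" "Ti (Ti (V 0) (V 1)) (V 2)" "Ti (Ti (V 0) (V 1)) (V 2)"]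
      assms l1 by (simp add: add_mset_commute)
  show ?thesis by (rule deq_trans[OF deq_trans[OF v1 v2] v3])
qed

abbreviation upd :: "'a rexp \<Rightarrow> 'a rexp \<Rightarrow> 'a rexp \<Rightarrow> 'a rexp \<Rightarrow> 'a rexp" where
  "upd z x y a \<equiv> rplus z (rtimes (rtimes x (rstar a)) y)"

lemma gen:
  assumes a: "rexp_over A a" and b: "rexp_over A b" and c: "rexp_over A c" and d: "rexp_over A d"
    and z: "rexp_over A z" and xp: "rexp_over A xp" and xq: "rexp_over A xq"
    and yp: "rexp_over A yp" and yq: "rexp_over A yq"
  shows "deq A (upd (upd z xp yp a) (upd xq xp b a) (upd yq c yp a) (upd d c b a))
               (upd (upd z xq yq d) (upd xp xq c d) (upd yp b yq d) (upd a b c d))"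
proof -
  let ?as = "rstar a" and ?ds = "rstar d"
  let ?Ds = "rstar (upd d c b a)"
  let ?As = "rstar (upd a b c d)"
  let ?P1 = "rplus ?as (rtimes (rtimes (rtimes (rtimes ?as b) ?Ds) c) ?as)"
  let ?Q2 = "rplus ?ds (rtimes (rtimes (rtimes (rtimes ?ds c) ?As) b) ?ds)"
  let ?R11 = "rtimes (rtimes ?as b) ?Ds" and ?R12 = "rtimes (rtimes ?As b) ?ds"
  let ?R21 = "rtimes (rtimes ?Ds c) ?as" and ?R22 = "rtimes (rtimes ?ds c) ?As"
  let ?Cn = "Pl (Pl (Pl (Pl (V 0) (Ti (Ti (V 1) (V 5)) (V 2))) (Ti (Ti (V 3) (V 6)) (V 4)))
              (Ti (Ti (V 1) (V 7)) (V 4))) (Ti (Ti (V 3) (V 8)) (V 2))"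
  have w1: "deq A (upd (upd z xp yp a) (upd xq xp b a) (upd yq c yp a) (upd d c b a))
     (ev [z, xp, yp, xq, yq, ?P1, ?Ds, ?R11, ?R21] ?Cn)"
    using norm_main[of A "[z, xp, yp, xq, yq, ?as, b, c, ?Ds]" "[z, xp, yp, xq, yq, ?as, b, c, ?Ds]"
      "Pl (Pl (V 0) (Ti (Ti (V 1) (V 5)) (V 2)))
          (Ti (Ti (Pl (V 3) (Ti (Ti (V 1) (V 5)) (V 6))) (V 8)) (Pl (V 4) (Ti (Ti (V 7) (V 5)) (V 2))))"
      "Pl (Pl (Pl (Pl (V 0) (Ti (Ti (V 1) (Pl (V 5) (Ti (Ti (Ti (Ti (V 5) (V 6)) (V 8)) (V 7)) (V 5)))) (V 2)))
          (Ti (Ti (V 3) (V 8)) (V 4)))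
              (Ti (Ti (V 1) (Ti (Ti (V 5) (V 6)) (V 8))) (V 4))) (Ti (Ti (V 3) (Ti (Ti (V 8) (V 7)) (V 5))) (V 2))"]
      assms by (simp add: add_mset_commute)
  have w3: "deq A (ev [z, xp, yp, xq, yq, ?As, ?Q2, ?R12, ?R22] ?Cn)
     (upd (upd z xq yq d) (upd xp xq c d) (upd yp b yq d) (upd a b c d))"
    using norm_main[of A "[z, xp, yp, xq, yq, ?ds, b, c, ?As]" "[z, xp, yp, xq, yq, ?ds, b, c, ?As]"
      "Pl (Pl (Pl (Pl (V 0) (Ti (Ti (V 1) (V 8)) (V 2)))
          (Ti (Ti (V 3) (Pl (V 5) (Ti (Ti (Ti (Ti (V 5) (V 7)) (V 8)) (V 6)) (V 5)))) (V 4)))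
              (Ti (Ti (V 1) (Ti (Ti (V 8) (V 6)) (V 5))) (V 4))) (Ti (Ti (V 3) (Ti (Ti (V 5) (V 7)) (V 8))) (V 2))"
      "Pl (Pl (V 0) (Ti (Ti (V 3) (V 5)) (V 4)))
          (Ti (Ti (Pl (V 1) (Ti (Ti (V 3) (V 5)) (V 7))) (V 8)) (Pl (V 2) (Ti (Ti (V 6) (V 5)) (V 4))))"]
      assms by (simp add: add_mset_commute)
  have e1: "deq A ?P1 ?As" using L1[OF a b c d] by (rule deq_sym)
  have e2: "deq A ?Ds ?Q2" using L1[OF d c b a] .
  have e3: "deq A ?R11 ?R12" using L3[OF a b c d] .
  have e4: "deq A ?R21 ?R22" using L3[OF d c b a] by (rule deq_sym)
  have w2: "deq A (ev [z, xp, yp, xq, yq, ?P1, ?Ds, ?R11, ?R21] ?Cn) (ev [z, xp, yp, xq, yq, ?As, ?Q2, ?R12, ?R22] ?Cn)"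
    by (rule norm_main) (use assms e1 e2 e3 e4 in simp_all)
  show ?thesis by (rule deq_trans[OF deq_trans[OF w1 w2] w3])
qed



fun sQ :: "('q, 'a) sstate \<Rightarrow> 'q set" where "sQ (SState Q' G H F K) = Q'"

fun valid :: "'a set \<Rightarrow> ('q, 'a) sstate \<Rightarrow> bool" where
  "valid A (SState Q G H F K) \<longleftrightarrow> rexp_over A H \<and> (\<forall>r\<in>Q. rexp_over A (G r) \<and> rexp_over A (K r))
     \<and> (\<forall>r\<in>Q. \<forall>s\<in>Q. rexp_over A (F r s))"

fun seq :: "'a set \<Rightarrow> ('q, 'a) sstate \<Rightarrow> ('q, 'a) sstate \<Rightarrow> bool" where
  "seq A (SState Q1 G1 H1 F1 K1) (SState Q2 G2 H2 F2 K2) \<longleftrightarrow> Q1 = Q2 \<and> deq A H1 H2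
     \<and> (\<forall>r\<in>Q1. deq A (G1 r) (G2 r) \<and> deq A (K1 r) (K2 r))
     \<and> (\<forall>r\<in>Q1. \<forall>s\<in>Q1. deq A (F1 r s) (F2 r s))"

lemma seq_refl: "valid A S \<Longrightarrow> seq A S S"
  by (cases S) auto

lemma seq_trans: "seq A S1 S2 \<Longrightarrow> seq A S2 S3 \<Longrightarrow> seq A S1 S3"
  by (cases S1; cases S2; cases S3) (simp; meson deq_trans)

lemma seq_sym: "seq A S1 S2 \<Longrightarrow> seq A S2 S1"
  by (cases S1; cases S2) (auto intro: deq_sym)

lemma seq_H: "seq A S1 S2 \<Longrightarrow> deq A (sstate_H S1) (sstate_H S2)"
  by (cases S1; cases S2) auto

lemma elim_sQ[simp]: "sQ (elim S q) = sQ S - {q}"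
  by (cases S) (simp add: Let_def)

lemma elim_valid: "valid A S \<Longrightarrow> q \<in> sQ S \<Longrightarrow> valid A (elim S q)"
  by (cases S) (auto simp: Let_def)

lemma elim_seq: "seq A S1 S2 \<Longrightarrow> q \<in> sQ S1 \<Longrightarrow> seq A (elim S1 q) (elim S2 q)"
proof (cases S1; cases S2)
  fix Q1 G1 H1 F1 K1 Q2 G2 H2 F2 K2
  assume s: "seq A S1 S2" "q \<in> sQ S1" and S: "S1 = SState Q1 G1 H1 F1 K1" "S2 = SState Q2 G2 H2 F2 K2"
  from s S have e: "Q1 = Q2" "deq A H1 H2" "\<And>r. r \<in> Q1 \<Longrightarrow> deq A (G1 r) (G2 r)"
    "\<And>r. r \<in> Q1 \<Longrightarrow> deq A (K1 r) (K2 r)" "\<And>r s. r \<in> Q1 \<Longrightarrow> s \<in> Q1 \<Longrightarrow> deq A (F1 r s) (F2 r s)"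
    and q: "q \<in> Q1" by auto
  show ?thesis unfolding S using e q
    by (auto simp: Let_def intro!: deq_plus deq_times deq_star)
qed

lemma swap:
  assumes v: "valid A S" and p: "p \<in> sQ S" and q: "q \<in> sQ S" and pq: "p \<noteq> q"
  shows "seq A (elim (elim S p) q) (elim (elim S q) p)"
proof (cases S)
  case (SState Q G H F K)
  have o: "rexp_over A H" "\<And>r. r \<in> Q \<Longrightarrow> rexp_over A (G r)" "\<And>r. r \<in> Q \<Longrightarrow> rexp_over A (K r)"
     "\<And>r s. r \<in> Q \<Longrightarrow> s \<in> Q \<Longrightarrow> rexp_over A (F r s)" using v SState by auto
  have pQ: "p \<in> Q" and qQ: "q \<in> Q" using p q SState by auto
  have qp: "q \<noteq> p" using pq by simp
  have QQ: "Q - {p} - {q} = Q - {q} - {p}" by blast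
  show ?thesis unfolding SState using pQ qQ pq qp
    apply (simp add: Let_def QQ)
    apply (intro conjI ballI)
       apply (rule gen; simp add: o pQ qQ)
      apply (rule gen; simp add: o pQ qQ)
     apply (rule gen; simp add: o pQ qQ)
    apply (rule gen; simp add: o pQ qQ)
    done
qed

lemma foldl_sQ: "sQ (foldl elim S xs) = sQ S - set xs"
  by (induction xs arbitrary: S) auto

lemma foldl_valid: "valid A S \<Longrightarrow> distinct xs \<Longrightarrow> set xs \<subseteq> sQ S \<Longrightarrow> valid A (foldl elim S xs)"
proof (induction xs arbitrary: S)
  case (Cons x xs)
  have "valid A (elim S x)" using Cons.prems by (intro elim_valid) auto
  then show ?case using Cons.prems by simp (rule Cons.IH; auto)
qed simp

lemma foldl_seq: "seq A S1 S2 \<Longrightarrow> distinct xs \<Longrightarrow> set xs \<subseteq> sQ S1 \<Longrightarrow>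
   seq A (foldl elim S1 xs) (foldl elim S2 xs)"
proof (induction xs arbitrary: S1 S2)
  case Nil then show ?case by simp
next
  case (Cons x xs)
  have "seq A (elim S1 x) (elim S2 x)" using Cons.prems by (intro elim_seq) auto
  then show ?case using Cons by simp (rule Cons.IH; auto)
qed

lemma move: "valid A S \<Longrightarrow> distinct (ys @ x # zs) \<Longrightarrow> set (ys @ x # zs) \<subseteq> sQ S \<Longrightarrow>
  seq A (foldl elim S (ys @ x # zs)) (foldl elim S (x # ys @ zs))"
proof (induction ys arbitrary: S)
  case Nil then show ?case by (auto intro!: seq_refl foldl_valid elim_valid)
next
  case (Cons y ys)
  have vy: "valid A (elim S y)" using Cons.prems by (intro elim_valid) auto
  have 1: "seq A (foldl elim (elim S y) (ys @ x # zs)) (foldl elim (elim S y) (x # ys @ zs))"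
    using Cons.prems vy by (intro Cons.IH) auto
  have sw: "seq A (elim (elim S y) x) (elim (elim S x) y)"
    using Cons.prems by (intro swap) auto
  have 2: "seq A (foldl elim (elim (elim S y) x) (ys @ zs)) (foldl elim (elim (elim S x) y) (ys @ zs))"
    using Cons.prems sw by (intro foldl_seq) auto
  show ?case using seq_trans[OF 1] 2 by simp
qed

lemma perm: "valid A S \<Longrightarrow> distinct xs \<Longrightarrow> distinct ys \<Longrightarrow> set xs = set ys \<Longrightarrow> set xs \<subseteq> sQ S \<Longrightarrow>
  seq A (foldl elim S xs) (foldl elim S ys)"
proof (induction xs arbitrary: S ys)
  case Nil then show ?case by (simp add: seq_refl)
next
  case (Cons x xs)
  then have "x \<in> set ys" by auto
  then obtain us vs where ys: "ys = us @ x # vs" by (meson split_list)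
  have vx: "valid A (elim S x)" using Cons.prems by (intro elim_valid) auto
  have 1: "seq A (foldl elim (elim S x) xs) (foldl elim (elim S x) (us @ vs))"
    using Cons.prems vx ys by (intro Cons.IH) auto
  have 2: "seq A (foldl elim S (us @ x # vs)) (foldl elim S (x # us @ vs))"
    using Cons.prems ys by (intro move) auto
  have 3: "seq A (foldl elim (elim S x) (us @ vs)) (foldl elim S ys)" using seq_sym[OF 2] ys by simp
  show ?case using seq_trans[OF 1 3] by simp
qed

lemma sum_of_over: "sum_of X S \<Longrightarrow> red X = X \<and> atoms X = S \<and> X \<noteq> RZero"
  by (induction rule: sum_of.induct) (auto simp: rplus_def)

theorem corollary3p7:
  fixes Q :: "'q set" and A :: "'a set" and E :: "('q \<times> 'a \<times> 'q) set"
    and I T :: "'q set" and lab :: "'q \<Rightarrow> 'q \<Rightarrow> 'a rexp" and \<omega> \<omega>' :: "'q list"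
  assumes "finite_automaton Q A E I T"
    and "label_exprs E lab"
    and "total_order_list Q \<omega>" and "total_order_list Q \<omega>'"
  shows "derivable (NSP_ax A) A (SR \<omega> Q I T lab) (SR \<omega>' Q I T lab)"
proof -
  let ?S = "SState Q (\<lambda>p. if p \<in> I then ROne else RZero) RZero lab (\<lambda>p. if p \<in> T then ROne else RZero)"
  have EA: "E \<subseteq> Q \<times> A \<times> Q" using assms(1) by (simp add: finite_automaton_def)
  have lab: "rexp_over A (lab r s)" for r s
  proof -
    let ?L = "{a. (r, a, s) \<in> E}"
    have "?L \<subseteq> A" using EA by auto
    then show ?thesis using assms(2) sum_of_over[of "lab r s" ?L]
      unfolding label_exprs_def rexp_over_def by (metis over_Zero rexp_over_def)
  qed
  have v: "valid A ?S" using lab by simp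
  have "seq A (foldl elim ?S \<omega>) (foldl elim ?S \<omega>')"
    using assms(3,4) v by (intro perm) (auto simp: total_order_list_def)
  then show ?thesis unfolding SR_def by (rule seq_H)
qed

end
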